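(* Let $(\Omega,\mathcal{F},P)=([0,1],\mathcal{B}([0,1]),\lambda)$ with $\lambda$ Lebesgue measure. Let $(\varepsilon_n)\subset(0,1)$ with $\varepsilon_n\to0$, and let $S^n_1(\omega)=-\frac{1}{\sqrt{\omega}}$ for $\omega\in[0,\varepsilon_n)$ and $S^n_1(\omega)=\frac{1}{(1-\omega)^{1/(n+1)}}$ for $\omega\in[\varepsilon_n,1]$, where $(\varepsilon_n)$ is chosen such that $E[S^n_1]=1$ for all $n$. Then there is no probability measure $Q\sim\lambda$ such that $E_Q[S^n_1]=0$ for all $n\in\mathbb{N}$. *)

theory Defs
  imports "HOL-Probability.Probability"
begin

definition P01 :: "real measure" where
  "P01 = restrict_space lborel {0..1}"

text \<open>The random variable S^n_1, depending on the sequence eps.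
  Values at the null points 0 and 1 are irrelevant (Isabelle: x/0 = 0).\<close>
definition S1 :: "(nat \<Rightarrow> real) \<Rightarrow> nat \<Rightarrow> real \<Rightarrow> real" where
  "S1 eps n \<omega> = (if \<omega> < eps n then - 1 / sqrt \<omega>
                   else 1 / ((1 - \<omega>) powr (1 / (real n + 1))))"

definition equiv_measure :: "'a measure \<Rightarrow> 'a measure \<Rightarrow> bool" where
  "equiv_measure Q M \<longleftrightarrow> sets Q = sets M \<and>
     (\<forall>A\<in>sets M. emeasure Q A = 0 \<longleftrightarrow> emeasure M A = 0)"

end

theory Submission
  imports Defs "HOL-Real_Asymp.Real_Asymp"
begin

lemma bound1:
  fixes w e en :: real and n :: nat
  assumes "0 \<le> w" "w \<le> 1" "n \<ge> 1" "0 < en"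
  shows "\<bar>S1 eps n w\<bar> \<le> 1 / sqrt w + 1 / sqrt (1 - w) + 1"
proof (cases "w < eps n")
  case True
  then show ?thesis using assms by (simp add: S1_def)
next
  case False
  show ?thesis
  proof (cases "w = 1")
    case True then show ?thesis using False by (simp add: S1_def)
  next
    case w1: False
    have pos: "0 < 1 - w" "1 - w \<le> 1" using assms w1 by auto
    have "1 / (real n + 1) \<le> 1/2" using assms by (simp add: field_simps)
    hence "(1 - w) powr (1/2) \<le> (1 - w) powr (1 / (real n + 1))"
      using pos by (intro powr_mono') auto
    hence "1 / ((1 - w) powr (1 / (real n + 1))) \<le> 1 / sqrt (1 - w)"
      using pos by (simp add: powr_half_sqrt[symmetric] frac_le)
    moreover have "0 \<le> 1 / sqrt w" using assms by simp
    moreover have "\<bar>S1 eps n w\<bar> = 1 / ((1 - w) powr (1 / (real n + 1)))"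
      using False pos by (simp add: S1_def)
    ultimately show ?thesis by linarith
  qed
qed

lemma bound2:
  fixes w :: real
  assumes "0 \<le> w" "w \<le> 1" "0 < eps 1" "eps 1 < 1"
  shows "1 / sqrt w + 1 / sqrt (1 - w) + 1 \<le>
     \<bar>S1 eps 1 w\<bar> + (1 / sqrt (eps 1) + 1 / sqrt (1 - eps 1) + 1)"
proof (cases "w < eps 1")
  case True
  have "1 / sqrt (1 - w) \<le> 1 / sqrt (1 - eps 1)"
    using True assms by (intro divide_left_mono) auto
  moreover have "0 \<le> 1 / sqrt (eps 1)" using assms by simp
  moreover have "\<bar>S1 eps 1 w\<bar> = 1 / sqrt w" using True assms by (simp add: S1_def)
  ultimately show ?thesis by linarith
next
  case False
  have "1 / sqrt w \<le> 1 / sqrt (eps 1)"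
    using False assms by (intro divide_left_mono) auto
  moreover have "\<bar>S1 eps 1 w\<bar> = 1 / sqrt (1 - w)"
    using False assms by (simp add: S1_def powr_half_sqrt)
  moreover have "0 \<le> 1 / sqrt (1 - eps 1)" using assms by simp
  ultimately show ?thesis by linarith
qed

theorem lemma6p3:
  fixes eps :: "nat \<Rightarrow> real"
  assumes eps_range: "\<And>n. n \<ge> 1 \<Longrightarrow> 0 < eps n \<and> eps n < 1"
    and eps_lim: "eps \<longlonglongrightarrow> 0"
    and mean_one: "\<And>n. n \<ge> 1 \<Longrightarrow> integrable P01 (S1 eps n) \<and> integral\<^sup>L P01 (S1 eps n) = 1"
  shows "\<not> (\<exists>Q :: real measure. prob_space Q \<and> equiv_measure Q P01 \<and>
            (\<forall>n\<ge>1. integrable Q (S1 eps n) \<and> integral\<^sup>L Q (S1 eps n) = 0))"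
proof
  assume "\<exists>Q :: real measure. prob_space Q \<and> equiv_measure Q P01 \<and>
            (\<forall>n\<ge>1. integrable Q (S1 eps n) \<and> integral\<^sup>L Q (S1 eps n) = 0)"
  then obtain Q :: "real measure" where PQ: "prob_space Q" and EQ: "equiv_measure Q P01"
    and I: "\<And>n. n \<ge> 1 \<Longrightarrow> integrable Q (S1 eps n) \<and> integral\<^sup>L Q (S1 eps n) = 0"
    by blast
  have setsQ: "sets Q = sets P01" using EQ by (simp add: equiv_measure_def)
  have spP: "space P01 = {0..1}" by (simp add: P01_def)
  have spQ: "space Q = {0..1}" using sets_eq_imp_space_eq[OF setsQ] spP by simp
  have N: "{0,1} \<in> sets P01" by (simp add: P01_def sets_restrict_space_iff)
  have "emeasure P01 {0,1} = 0"
    unfolding P01_def by (subst emeasure_restrict_space) (auto intro: emeasure_lborel_countable)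
  hence "emeasure Q {0,1} = 0" using EQ N by (simp add: equiv_measure_def)
  hence NQ: "{0::real,1} \<in> null_sets Q" using N setsQ by auto
  have AEQ: "AE x in Q. 0 < x \<and> x < 1"
    by (rule AE_I'[OF NQ]) (auto simp: spQ)
  have e1: "0 < eps 1" "eps 1 < 1" using eps_range[of 1] by auto
  define C where "C = 1 / sqrt (eps 1) + 1 / sqrt (1 - eps 1) + 1"
  have intw: "integrable Q (\<lambda>x. \<bar>S1 eps 1 x\<bar> + C)"
    using I[of 1] PQ by (intro Bochner_Integration.integrable_add integrable_abs)
      (auto intro: finite_measure.integrable_const prob_space.finite_measure)
  have lim: "(\<lambda>i. integral\<^sup>L Q (S1 eps (Suc i))) \<longlonglongrightarrow> integral\<^sup>L Q (\<lambda>x. 1)"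
  proof (rule integral_dominated_convergence[OF _ _ intw])
    show "(\<lambda>x. 1::real) \<in> borel_measurable Q" by simp
    show "S1 eps (Suc i) \<in> borel_measurable Q" for i using I[of "Suc i"] by auto
    show "AE x in Q. norm (S1 eps (Suc i) x) \<le> \<bar>S1 eps 1 x\<bar> + C" for i
      using AEQ
    proof eventually_elim
      case (elim x)
      have "\<bar>S1 eps (Suc i) x\<bar> \<le> 1 / sqrt x + 1 / sqrt (1 - x) + 1"
        using elim eps_range[of "Suc i"] by (intro bound1) auto
      also have "\<dots> \<le> \<bar>S1 eps 1 x\<bar> + C"
        unfolding C_def using elim e1 by (intro bound2) auto
      finally show ?case by simp
    qed
    show "AE x in Q. (\<lambda>i. S1 eps (Suc i) x) \<longlonglongrightarrow> 1"
      using AEQ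
    proof eventually_elim
      case (elim x)
      have "\<forall>\<^sub>F i in sequentially. eps (Suc i) < x"
        using eps_lim elim LIMSEQ_Suc order_tendstoD(2) by blast
      hence ev: "\<forall>\<^sub>F i in sequentially. S1 eps (Suc i) x = 1 / ((1 - x) powr (1 / (real (Suc i) + 1)))"
        by eventually_elim (auto simp: S1_def)
      have "(\<lambda>i. 1 / (real (Suc i) + 1)) \<longlonglongrightarrow> 0"
        by real_asymp
      hence "(\<lambda>i. (1 - x) powr (1 / (real (Suc i) + 1))) \<longlonglongrightarrow> (1 - x) powr 0"
        using elim by (intro tendsto_intros) auto
      hence "(\<lambda>i. 1 / ((1 - x) powr (1 / (real (Suc i) + 1)))) \<longlonglongrightarrow> 1 / 1"
        using elim by (intro tendsto_intros) auto
      then show ?case using ev by (simp add: tendsto_cong)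
    qed
  qed
  have "integral\<^sup>L Q (\<lambda>x. 1::real) = 1"
    using PQ by (simp add: prob_space.prob_space)
  moreover have "(\<lambda>i. integral\<^sup>L Q (S1 eps (Suc i))) = (\<lambda>i. 0)"
    using I by auto
  ultimately have "(\<lambda>i. 0::real) \<longlonglongrightarrow> 1" using lim by simp
  thus False using LIMSEQ_unique[OF tendsto_const] by fastforce
qed

end
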